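(* Let $\Lambda$ be a finite or countable alphabet with $\#\Lambda\ge2$ and $\mu$ any shift-invariant probability measure on $\Lambda^{\mathbb N}$. If $S\subset\mathbb N$ is infinite with lower density $0$, then $S$ does not preserve simple $\mu$-normality (and hence does not preserve $\mu$-normality): there exists a $\mu$-normal $x\in\Lambda^{\mathbb N}$ such that $x|_S$ is not simply $\mu$-normal.
   Context: A point $x\in\Lambda^{\mathbb N}$ is $\mu$-normal if every finite block $B$ occurs in $x$ with limiting frequency $\mu([B])$ ($[B]$ the cylinder of sequences starting with $B$). $x$ is simply $\mu$-normal if each symbol $a\in\Lambda$ occurs in $x$ with limiting frequency $\mu([a])$. For $S=\{s_1<s_2<\dots\}$, $x|_S=(x_{s_1},x_{s_2},\dots)$. $S$ preserves (simple) $\mu$-normality if $x|_S$ is (simply) $\mu$-normal for every $\mu$-normal $x$. Lower density: $\underline d(S)=\liminf_n \#(S\cap\{1,\dots,n\})/n$. *)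

theory Defs
  imports "HOL-Probability.Probability" "HOL-Library.Infinite_Set"
begin

text \<open>Sequences over the alphabet 'a are functions nat => 'a (positions indexed from 0).\<close>

definition cylinder :: "'a list \<Rightarrow> (nat \<Rightarrow> 'a) set" where
  "cylinder B = {x. \<forall>j<length B. x j = B ! j}"

definition occurs_at :: "'a list \<Rightarrow> (nat \<Rightarrow> 'a) \<Rightarrow> nat \<Rightarrow> bool" where
  "occurs_at B x i \<longleftrightarrow> (\<forall>j<length B. x (i + j) = B ! j)"

definition block_freq :: "'a list \<Rightarrow> (nat \<Rightarrow> 'a) \<Rightarrow> nat \<Rightarrow> real" where
  "block_freq B x n = real (card {i. i < n \<and> occurs_at B x i}) / real n"

definition seq_space :: "(nat \<Rightarrow> 'a) measure" where
  "seq_space = PiM UNIV (\<lambda>_. count_space UNIV)"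

definition shift :: "(nat \<Rightarrow> 'a) \<Rightarrow> (nat \<Rightarrow> 'a)" where
  "shift x = (\<lambda>n. x (Suc n))"

definition shift_invariant_prob :: "(nat \<Rightarrow> 'a) measure \<Rightarrow> bool" where
  "shift_invariant_prob M \<longleftrightarrow> prob_space M \<and> sets M = sets seq_space \<and>
     (\<forall>A\<in>sets M. measure M (shift -` A \<inter> space M) = measure M A)"

definition mu_normal :: "(nat \<Rightarrow> 'a) measure \<Rightarrow> (nat \<Rightarrow> 'a) \<Rightarrow> bool" where
  "mu_normal M x \<longleftrightarrow> (\<forall>B. (\<lambda>n. block_freq B x n) \<longlonglongrightarrow> measure M (cylinder B))"

definition simply_mu_normal :: "(nat \<Rightarrow> 'a) measure \<Rightarrow> (nat \<Rightarrow> 'a) \<Rightarrow> bool" where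
  "simply_mu_normal M x \<longleftrightarrow> (\<forall>a. (\<lambda>n. block_freq [a] x n) \<longlonglongrightarrow> measure M (cylinder [a]))"

definition restrict_seq :: "(nat \<Rightarrow> 'a) \<Rightarrow> nat set \<Rightarrow> (nat \<Rightarrow> 'a)" where
  "restrict_seq x S = (\<lambda>k. x (enumerate S k))"

definition lower_density :: "nat set \<Rightarrow> ereal" where
  "lower_density S = liminf (\<lambda>n. ereal (real (card (S \<inter> {..<n})) / real n))"

end

theory Submission
  imports Defs
begin

definition occl :: "'a list \<Rightarrow> 'a list \<Rightarrow> nat" where
  "occl B W = card {i. i + length B \<le> length W \<and> (\<forall>j<length B. W!(i+j) = B!j)}"

lemma occl_le: "B \<noteq> [] \<Longrightarrow> occl B W \<le> length W"
proof -
  assume "B \<noteq> []"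
  have "{i. i + length B \<le> length W \<and> (\<forall>j<length B. W!(i+j) = B!j)} \<subseteq> {..<length W}"
    using \<open>B \<noteq> []\<close> by (auto simp: length_greater_0_conv[symmetric] simp del: length_greater_0_conv)
  from card_mono[OF _ this] show ?thesis by (simp add: occl_def)
qed

lemma occl_Nil: "B \<noteq> [] \<Longrightarrow> occl B [] = 0"
  using occl_le[of B "[]"] by simp

lemma occl_append:
  assumes "B \<noteq> []"
  shows "occl B u + occl B v \<le> occl B (u@v)" "occl B (u@v) \<le> occl B u + occl B v + length B"
proof -
  define P where "P = (\<lambda>W i. i + length B \<le> length W \<and> (\<forall>j<length B. W!(i+j) = B!j))"
  have occ: "occl B W = card {i. P W i}" for W by (simp add: occl_def P_def)
  have fin: "finite {i. P W i}" for W
    by (rule finite_subset[of _ "{..length W}"]) (auto simp: P_def)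
  define Au where "Au = {i. P u i}"
  define Av where "Av = (\<lambda>i. i + length u) ` {i. P v i}"
  define R where "R = {i. length u < i + length B \<and> i < length u}"
  have lB: "length B > 0" using assms by simp
  have AuAv: "Au \<union> Av \<subseteq> {i. P (u@v) i}"
    by (auto simp: Au_def Av_def P_def nth_append)
  have disj: "Au \<inter> Av = {}"
    using lB by (auto simp: Au_def Av_def P_def)
  have cAv: "card Av = card {i. P v i}"
    unfolding Av_def by (rule card_image) (simp add: inj_on_def)
  have finAv: "finite Av" unfolding Av_def using fin by simp
  have finAu: "finite Au" unfolding Au_def using fin by simp
  have "card (Au \<union> Av) \<le> card {i. P (u@v) i}"
    by (rule card_mono[OF fin AuAv])
  then show "occl B u + occl B v \<le> occl B (u@v)"
    using card_Un_disjoint[OF finAu finAv disj] cAv by (simp add: occ Au_def)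
  have sub: "{i. P (u@v) i} \<subseteq> Au \<union> Av \<union> R"
  proof
    fix i assume i: "i \<in> {i. P (u@v) i}"
    show "i \<in> Au \<union> Av \<union> R"
    proof (cases "i + length B \<le> length u")
      case True
      then have "P u i" using i by (auto simp: P_def nth_append)
      then show ?thesis by (simp add: Au_def)
    next
      case False
      show ?thesis
      proof (cases "i < length u")
        case True then show ?thesis using False by (simp add: R_def)
      next
        case False
        then have "P v (i - length u)" using i
          by (auto simp: P_def nth_append)
        then have "i \<in> Av" unfolding Av_def using False
          by (intro image_eqI[of _ _ "i - length u"]) auto
        then show ?thesis by simp
      qed
    qed
  qed
  have R_sub: "R \<subseteq> {length u - length B ..< length u}" by (auto simp: R_def)
  have cR: "card R \<le> length B"
    using card_mono[OF _ R_sub] by simp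
  have finR: "finite R" using R_sub finite_subset by blast
  have "card {i. P (u@v) i} \<le> card (Au \<union> Av \<union> R)"
    by (rule card_mono) (use finAu finAv finR sub in auto)
  also have "\<dots> \<le> card Au + card Av + card R"
    by (meson add_le_mono card_Un_le le_trans order_refl)
  finally show "occl B (u@v) \<le> occl B u + occl B v + length B"
    using cAv cR by (simp add: occ Au_def)
qed

lemma occl_concat:
  assumes "B \<noteq> []"
  shows "sum_list (map (occl B) ps) \<le> occl B (concat ps)"
        "occl B (concat ps) \<le> sum_list (map (occl B) ps) + length B * length ps"
proof (induction ps)
  case Nil
  { case 1 show ?case using occl_Nil[OF assms] by simp }
  { case 2 show ?case using occl_Nil[OF assms] by simp }
next
  case (Cons p ps)
  { case 1 show ?case using Cons.IH(1) occl_append(1)[OF assms, of p "concat ps"] by simp }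
  { case 2 show ?case using Cons.IH(2) occl_append(2)[OF assms, of p "concat ps"] by simp }
qed

lemma space_seq_space: "space seq_space = UNIV"
  unfolding seq_space_def by (simp add: space_PiM)

lemma sets_coord:
  fixes c :: 'a
  shows "{x::nat\<Rightarrow>'a. x k = c} \<in> sets seq_space"
proof -
  have "(\<lambda>x::nat\<Rightarrow>'a. x k) \<in> measurable seq_space (count_space UNIV)"
    unfolding seq_space_def by (rule measurable_component_singleton) simp
  from measurable_sets[OF this, of "{c}"] show ?thesis
    by (simp add: space_seq_space vimage_def)
qed

lemma sets_occ: "{x::nat\<Rightarrow>'a. occurs_at B x i} \<in> sets seq_space"
proof -
  show ?thesis
  proof (cases "B = []")
    case True
    then show ?thesis using sets.top[of seq_space] by (simp add: occurs_at_def space_seq_space)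
  next
    case False
    have "{x::nat\<Rightarrow>'a. occurs_at B x i} = (\<Inter>j\<in>{..<length B}. {x. x (i+j) = B!j})"
      by (auto simp: occurs_at_def)
    also have "\<dots> \<in> sets seq_space"
      using False by (intro sets.finite_INT sets_coord) auto
    finally show ?thesis .
  qed
qed

lemma cyl_occ: "cylinder B = {x. occurs_at B x 0}"
  by (simp add: cylinder_def occurs_at_def)

lemma sets_cyl: "cylinder B \<in> sets seq_space"
  using sets_occ[of B 0] by (simp add: cyl_occ)

lemma occ_shift: "{x. occurs_at B x (Suc i)} = shift -` {x. occurs_at B x i}"
  by (auto simp: occurs_at_def shift_def)

context
  fixes M :: "(nat \<Rightarrow> 'a) measure"
  assumes SI: "shift_invariant_prob M"
begin

lemma PS: "prob_space M" using SI by (simp add: shift_invariant_prob_def)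
lemma setsM: "sets M = sets seq_space" using SI by (simp add: shift_invariant_prob_def)
lemma spaceM: "space M = UNIV"
  using sets_eq_imp_space_eq[OF setsM] space_seq_space by simp

lemma occ_sets: "{x. occurs_at B x i} \<in> sets M" using sets_occ setsM by blast
lemma cyl_sets: "cylinder B \<in> sets M" using sets_cyl setsM by blast

lemma measure_occ: "measure M {x. occurs_at B x i} = measure M (cylinder B)"
proof (induction i)
  case 0 then show ?case by (simp add: cyl_occ)
next
  case (Suc i)
  have "measure M {x. occurs_at B x (Suc i)} = measure M (shift -` {x. occurs_at B x i} \<inter> space M)"
    by (simp add: occ_shift spaceM)
  also have "\<dots> = measure M {x. occurs_at B x i}"
  proof -
    have "\<forall>A\<in>sets M. measure M (shift -` A \<inter> space M) = measure M A"
      using SI by (simp add: shift_invariant_prob_def)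
    then show ?thesis using occ_sets[of B i] by blast
  qed
  finally show ?case using Suc by simp
qed

end

lemma cyl_disj: "length w = length w' \<Longrightarrow> w \<noteq> w' \<Longrightarrow> cylinder w \<inter> cylinder w' = {}"
  by (auto simp: cylinder_def intro: nth_equalityI)

context
  fixes M :: "(nat \<Rightarrow> 'a::countable) measure"
  assumes SI: "shift_invariant_prob M"
begin

interpretation prob_space M by (rule PS[OF SI])

lemma finite_cover:
  assumes "\<eta> > 0"
  shows "\<exists>D. finite D \<and> (\<forall>w\<in>D. length w = L) \<and> measure M (\<Union>w\<in>D. cylinder w) \<ge> 1 - \<eta>"
proof -
  define D where "D = (\<lambda>n. {w. \<exists>m<n. w = (from_nat m :: 'a list) \<and> length w = L})"
  define A where "A = (\<lambda>n. \<Union>w\<in>D n. cylinder w)"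
  have finD: "finite (D n)" for n
  proof -
    have "D n \<subseteq> from_nat ` {..<n}" by (auto simp: D_def)
    then show ?thesis using finite_surj by blast
  qed
  have rA: "range A \<subseteq> sets M"
    using finD cyl_sets[OF SI] by (auto simp: A_def intro!: sets.finite_UN)
  have incA: "incseq A"
  proof (rule incseq_SucI)
    fix n have "D n \<subseteq> D (Suc n)" unfolding D_def by (auto intro: less_SucI)
    then show "A n \<subseteq> A (Suc n)" unfolding A_def by blast
  qed
  have UA: "(\<Union>n. A n) = space M"
  proof -
    have "x \<in> (\<Union>n. A n)" for x
    proof -
      define w where "w = map x [0..<L]"
      have "x \<in> cylinder w" by (simp add: cylinder_def w_def)
      moreover have "w \<in> D (Suc (to_nat w))"
        unfolding D_def by (auto simp: w_def)
      ultimately show ?thesis by (auto simp: A_def)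
    qed
    then show ?thesis using spaceM[OF SI] by auto
  qed
  have "(\<lambda>n. measure M (A n)) \<longlonglongrightarrow> measure M (space M)"
    using finite_Lim_measure_incseq[OF rA incA] UA by simp
  then have "(\<lambda>n. measure M (A n)) \<longlonglongrightarrow> 1" using prob_space by simp
  then have "eventually (\<lambda>n. measure M (A n) > 1 - \<eta>) sequentially"
    using assms by (intro order_tendstoD) auto
  then obtain n where "measure M (A n) > 1 - \<eta>" by (meson eventually_sequentially order_refl)
  then show ?thesis using finD by (intro exI[of _ "D n"]) (auto simp: A_def D_def)
qed

lemma sum_estimate:
  assumes finD: "finite D" and lenD: "\<forall>w\<in>D. length w = L" and B: "B \<noteq> []" "length B \<le> L"
  defines "mA \<equiv> measure M (\<Union>w\<in>D. cylinder w)"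
  shows "(\<Sum>w\<in>D. measure M (cylinder w) * occl B w) \<le> real (L + 1 - length B) * measure M (cylinder B)"
    and "(\<Sum>w\<in>D. measure M (cylinder w) * occl B w) \<ge> real (L + 1 - length B) * (measure M (cylinder B) - (1 - mA))"
proof -
  define I where "I = {i. i + length B \<le> L}"
  define P where "P = (\<lambda>w i. (\<forall>j<length B. w!(i+j) = B!j))"
  define A where "A = (\<Union>w\<in>D. cylinder w)"
  have finI: "finite I" by (rule finite_subset[of _ "{..L}"]) (auto simp: I_def)
  have cI: "card I = L + 1 - length B"
  proof -
    have "I = {..L - length B}" using B by (auto simp: I_def)
    then show ?thesis using B by simp
  qed
  have occ_eq: "real (occl B w) = (\<Sum>i\<in>I. if P w i then 1 else 0)" if "w \<in> D" for w
  proof -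
    have "occl B w = card {i\<in>I. P w i}"
      using lenD that by (simp add: occl_def I_def P_def)
    moreover have "{i\<in>I. P w i} = I \<inter> Collect (P w)" by auto
    ultimately show ?thesis using finI by (simp add: sum.If_cases)
  qed
  have "(\<Sum>w\<in>D. measure M (cylinder w) * occl B w)
        = (\<Sum>w\<in>D. \<Sum>i\<in>I. if P w i then measure M (cylinder w) else 0)"
    by (rule sum.cong) (auto simp: occ_eq sum_distrib_left if_distrib intro!: sum.cong)
  also have "\<dots> = (\<Sum>i\<in>I. \<Sum>w\<in>D. if P w i then measure M (cylinder w) else 0)"
    by (rule sum.swap)
  also have "\<dots> = (\<Sum>i\<in>I. measure M ({x. occurs_at B x i} \<inter> A))"
  proof (rule sum.cong[OF refl])
    fix i assume i: "i \<in> I"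
    have eq: "{x. occurs_at B x i} \<inter> A = (\<Union>w\<in>{w\<in>D. P w i}. cylinder w)"
      using i lenD by (auto simp: A_def cylinder_def occurs_at_def P_def I_def)
    have "measure M ((\<Union>w\<in>{w\<in>D. P w i}. cylinder w)) = (\<Sum>w\<in>{w\<in>D. P w i}. measure M (cylinder w))"
    proof (rule finite_measure_finite_Union)
      show "finite {w\<in>D. P w i}" using finD by simp
      show "cylinder ` {w\<in>D. P w i} \<subseteq> sets M" using cyl_sets[OF SI] by auto
      show "disjoint_family_on cylinder {w\<in>D. P w i}"
        unfolding disjoint_family_on_def using lenD cyl_disj by (metis (mono_tags, lifting) mem_Collect_eq)
    qed
    moreover have "(\<Sum>w\<in>D. if P w i then measure M (cylinder w) else 0) = (\<Sum>w\<in>{w\<in>D. P w i}. measure M (cylinder w))"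
      using finD by (simp add: sum.If_cases Int_def)
    ultimately show "(\<Sum>w\<in>D. if P w i then measure M (cylinder w) else 0) = measure M ({x. occurs_at B x i} \<inter> A)"
      by (simp only: eq)
  qed
  finally have main: "(\<Sum>w\<in>D. measure M (cylinder w) * occl B w) = (\<Sum>i\<in>I. measure M ({x. occurs_at B x i} \<inter> A))" .
  have Asets: "A \<in> sets M" using finD cyl_sets[OF SI] by (auto simp: A_def)
  have up: "measure M ({x. occurs_at B x i} \<inter> A) \<le> measure M (cylinder B)" for i
  proof -
    have "measure M ({x. occurs_at B x i} \<inter> A) \<le> measure M {x. occurs_at B x i}"
      by (rule finite_measure_mono) (auto simp: occ_sets[OF SI])
    then show ?thesis using measure_occ[OF SI, of B i] by simp
  qed
  have lo: "measure M ({x. occurs_at B x i} \<inter> A) \<ge> measure M (cylinder B) - (1 - mA)" for i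
  proof -
    have "{x. occurs_at B x i} \<subseteq> ({x. occurs_at B x i} \<inter> A) \<union> (space M - A)"
      using spaceM[OF SI] by auto
    then have "measure M {x. occurs_at B x i} \<le> measure M (({x. occurs_at B x i} \<inter> A) \<union> (space M - A))"
      by (intro finite_measure_mono) (auto simp: Asets occ_sets[OF SI] intro!: sets.Un sets.Diff sets.Int)
    also have "\<dots> \<le> measure M ({x. occurs_at B x i} \<inter> A) + measure M (space M - A)"
      by (intro eq_refl finite_measure_Union) (auto simp: Asets occ_sets[OF SI])
    finally have "measure M {x. occurs_at B x i} \<le> measure M ({x. occurs_at B x i} \<inter> A) + measure M (space M - A)" .
    moreover have "measure M (space M - A) = 1 - mA"
      using Asets prob_compl by (simp add: mA_def A_def)
    ultimately show ?thesis using measure_occ[OF SI, of B i] by simp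
  qed
  show "(\<Sum>w\<in>D. measure M (cylinder w) * occl B w) \<le> real (L + 1 - length B) * measure M (cylinder B)"
    unfolding main using sum_mono[of I _ "\<lambda>_. measure M (cylinder B)", OF up] cI by simp
  show "(\<Sum>w\<in>D. measure M (cylinder w) * occl B w) \<ge> real (L + 1 - length B) * (measure M (cylinder B) - (1 - mA))"
    unfolding main using sum_mono[of I "\<lambda>_. measure M (cylinder B) - (1 - mA)", OF lo] cI by simp
qed

end

lemma sum_list_rep:
  "sum_list (map f (concat (map (\<lambda>w. replicate (c w) w) dl))) = (\<Sum>w\<leftarrow>dl. c w * f w)"
  for f :: "'b \<Rightarrow> nat"
  by (induction dl) (simp_all add: sum_list_replicate)

lemma len_rep:
  "length (concat (map (\<lambda>w. replicate (c w) w) dl)) = (\<Sum>w\<leftarrow>dl. c w)"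
  by (induction dl) simp_all

lemma upper_arith:
  fixes n l d t mu b k eps mA occW S :: real
  assumes "0 < eps" "eps \<le> 1" "0 \<le> mu" "mu \<le> 1" "1 \<le> b" "b \<le> k" "6 * k \<le> eps * l" "0 \<le> l"
    "8 * d \<le> eps * n" "0 \<le> d" "1 - eps/8 \<le> mA" "mA \<le> 1" "t \<le> n * mA" "n * mA - d \<le> t"
    "occW \<le> n * S + b * t" "S \<le> (l + 1 - b) * mu" "0 \<le> n"
  shows "occW - mu * (l * t) \<le> eps * (l * t)"
proof -
  have t_le_n: "t \<le> n" using assms(13) assms(12) assms(17) by (metis mult_left_le mult.commute order_trans)
  have "n - t \<le> n * eps / 4"
  proof -
    have "n * (1 - mA) \<le> n * (eps/8)" using assms by (intro mult_left_mono) auto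
    then have "n - n * mA \<le> n * eps / 8" by (simp add: algebra_simps)
    moreover have "8 * d \<le> n * eps" using assms(9) by (simp add: mult.commute)
    ultimately show ?thesis using assms by linarith
  qed
  then have nt: "n - t \<le> n * eps / 4" .
  have n43: "n \<le> 4 * t / 3"
  proof -
    have "n * eps / 4 \<le> n / 4" using assms by (simp add: mult_left_le)
    then show ?thesis using nt by linarith
  qed
  have t0: "0 \<le> t" using n43 assms by linarith
  have "occW \<le> n * ((l + 1 - b) * mu) + b * t"
    using assms by (smt (verit) mult_left_mono)
  also have "n * ((l + 1 - b) * mu) \<le> n * (l * mu)"
    using assms by (intro mult_left_mono mult_right_mono) auto
  finally have o1: "occW \<le> n * (l * mu) + b * t" by linarith
  have "n * (l * mu) - mu * (l * t) = (mu * l) * (n - t)" by (simp add: algebra_simps)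
  also have "\<dots> \<le> l * (n - t)" using assms t_le_n
    by (intro mult_right_mono) (auto simp: mult_left_le_one_le)
  also have "\<dots> \<le> l * (n * eps / 4)" using assms nt by (intro mult_left_mono) auto
  also have "\<dots> \<le> l * ((4 * t / 3) * eps / 4)" using assms n43 by (intro mult_left_mono divide_right_mono mult_right_mono) auto
  finally have o2: "n * (l * mu) - mu * (l * t) \<le> eps * (l * t) / 3" by (simp add: algebra_simps)
  have "b * t \<le> (eps * l / 6) * t" using assms t0 by (intro mult_right_mono) auto
  then have o3: "b * t \<le> eps * (l * t) / 6" by (simp add: algebra_simps)
  have "0 \<le> eps * (l * t)" using assms t0 by simp
  then show ?thesis using o1 o2 o3 by linarith
qed

lemma lower_arith:
  fixes n l d t mu b k eps mA occW S :: real
  assumes "0 < eps" "eps \<le> 1" "0 \<le> mu" "mu \<le> 1" "1 \<le> b" "b \<le> k" "6 * k \<le> eps * l" "0 \<le> l"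
    "8 * d \<le> eps * n" "0 \<le> d" "1 - eps/8 \<le> mA" "mA \<le> 1" "t \<le> n * mA" "n * mA - d \<le> t"
    "n * S - d * l \<le> occW" "(l + 1 - b) * (mu - (1 - mA)) \<le> S" "0 \<le> n" "b \<le> l"
  shows "mu * (l * t) - occW \<le> eps * (l * t)"
proof -
  have t_le_n: "t \<le> n" using assms(13) assms(12) assms(17) by (metis mult_left_le mult.commute order_trans)
  have "n - t \<le> n * eps / 4"
  proof -
    have "n * (1 - mA) \<le> n * (eps/8)" using assms by (intro mult_left_mono) auto
    then have "n - n * mA \<le> n * eps / 8" by (simp add: algebra_simps)
    moreover have "8 * d \<le> n * eps" using assms(9) by (simp add: mult.commute)
    ultimately show ?thesis using assms by linarith
  qed
  then have nt: "n - t \<le> n * eps / 4" .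
  have n43: "n \<le> 4 * t / 3"
  proof -
    have "n * eps / 4 \<le> n / 4" using assms by (simp add: mult_left_le)
    then show ?thesis using nt by linarith
  qed
  have t0: "0 \<le> t" using n43 assms by linarith
  have s1: "(l - b) * mu \<le> (l + 1 - b) * mu" using assms by (intro mult_right_mono) auto
  have s2: "b * mu \<le> b" using assms by (simp add: mult_left_le)
  have s3: "(l + 1 - b) * (1 - mA) \<le> l * (eps / 8)" using assms by (intro mult_mono) auto
  have "(l + 1 - b) * (mu - (1 - mA)) = (l + 1 - b) * mu - (l + 1 - b) * (1 - mA)" by (simp add: algebra_simps)
  moreover have "(l - b) * mu = l * mu - b * mu" by (simp add: algebra_simps)
  ultimately have "l * mu - b - l * (eps / 8) \<le> S" using s1 s2 s3 assms(16) by linarith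
  then have "n * (l * mu - b - l * (eps / 8)) \<le> n * S" using assms by (intro mult_left_mono) auto
  then have o1: "n * (l * mu) - n * b - n * l * eps / 8 - d * l \<le> occW" using assms(15) by (simp add: algebra_simps)
  have o2: "mu * (l * t) \<le> n * (l * mu)"
  proof -
    have "(mu * l) * t \<le> (mu * l) * n" using assms t_le_n by (intro mult_left_mono) auto
    then show ?thesis by (simp add: algebra_simps)
  qed
  have o3: "n * b \<le> n * l * eps / 6"
  proof -
    have "n * b \<le> n * (eps * l / 6)" using assms by (intro mult_left_mono) auto
    then show ?thesis by (simp add: algebra_simps)
  qed
  have o4: "d * l \<le> n * l * eps / 8"
  proof -
    have "d * l \<le> (eps * n / 8) * l" using assms by (intro mult_right_mono) auto
    then show ?thesis by (simp add: algebra_simps)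
  qed
  have o5: "n * l * eps \<le> (4 * t / 3) * l * eps" using assms n43 by (intro mult_right_mono) auto
  have "0 \<le> l * t * eps" using assms t0 by simp
  then show ?thesis using o1 o2 o3 o4 o5 by (simp add: algebra_simps)
qed

context
  fixes M :: "(nat \<Rightarrow> 'a::countable) measure"
  assumes SI: "shift_invariant_prob M"
begin

interpretation prob_space M by (rule PS[OF SI])

lemma good_word:
  fixes eps :: real
  assumes eps: "0 < eps" "eps \<le> 1" and k: "1 \<le> k"
  shows "\<exists>W. k \<le> length W \<and> (\<forall>B. B \<noteq> [] \<and> length B \<le> k \<longrightarrow>
           \<bar>real (occl B W) - measure M (cylinder B) * length W\<bar> \<le> eps * length W)"
proof -
  define L where "L = nat \<lceil>6 * k / eps\<rceil> + k + 1"
  obtain D where finD: "finite D" and lenD: "\<forall>w\<in>D. length w = L"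
    and mA_ge: "measure M (\<Union>w\<in>D. cylinder w) \<ge> 1 - eps/8"
    using finite_cover[OF SI, of "eps/8" L] eps by auto
  define mA where "mA = measure M (\<Union>w\<in>D. cylinder w)"
  define d where "d = card D"
  define N :: nat where "N = nat \<lceil>8 * d / eps\<rceil> + 2"
  define m where "m = (\<lambda>w. measure M (cylinder w))"
  define c where "c = (\<lambda>w. nat \<lfloor>N * m w\<rfloor>)"
  obtain dl where dl: "set dl = D" "distinct dl" using finite_distinct_list[OF finD] by blast
  define ps where "ps = concat (map (\<lambda>w. replicate (c w) w) dl)"
  define W where "W = concat ps"
  have m0: "0 \<le> m w" for w by (simp add: m_def)
  have c_le: "real (c w) \<le> N * m w" for w
    using m0[of w] by (simp add: c_def)
  have c_ge: "N * m w - 1 \<le> real (c w)" for w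
    using m0[of w] by (simp add: c_def)
  have lps: "\<forall>p\<in>set ps. length p = L" using lenD dl by (auto simp: ps_def)
  have lenW: "length W = L * length ps"
  proof -
    have "length W = sum_list (map length ps)" by (simp add: W_def length_concat)
    also have "map length ps = map (\<lambda>_. L) ps" using lps by (intro map_cong) auto
    finally show ?thesis by (simp add: sum_list_triv)
  qed
  have T_eq: "length ps = (\<Sum>w\<in>D. c w)"
    using len_rep[of c dl] dl by (simp add: ps_def sum_list_distinct_conv_sum_set)
  have Q_eq: "sum_list (map (occl B) ps) = (\<Sum>w\<in>D. c w * occl B w)" for B
    using sum_list_rep[of "occl B" c dl] dl by (simp add: ps_def sum_list_distinct_conv_sum_set)
  have mA_sum: "mA = (\<Sum>w\<in>D. m w)"
    unfolding mA_def m_def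
  proof (rule finite_measure_finite_Union)
    show "finite D" by fact
    show "cylinder ` D \<subseteq> sets M" using cyl_sets[OF SI] by auto
    show "disjoint_family_on cylinder D"
      unfolding disjoint_family_on_def using lenD by (auto intro!: cyl_disj)
  qed
  have mA_le: "mA \<le> 1" unfolding mA_def by simp
  have T_le: "real (length ps) \<le> N * mA"
    unfolding T_eq mA_sum using c_le by (simp add: sum_distrib_left sum_mono)
  have T_ge: "N * mA - d \<le> real (length ps)"
  proof -
    have "(\<Sum>w\<in>D. N * m w - 1) \<le> (\<Sum>w\<in>D. real (c w))" by (rule sum_mono) (use c_ge in auto)
    then show ?thesis unfolding T_eq mA_sum d_def by (simp add: sum_distrib_left sum_subtractf)
  qed
  have L_ge: "6 * k / eps \<le> L" unfolding L_def by linarith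
  have L_ge2: "6 * k \<le> eps * L" using L_ge eps by (simp add: field_simps)
  have N_ge: "8 * d / eps \<le> N" unfolding N_def by linarith
  have N_ge2: "8 * d \<le> eps * N" using N_ge eps by (simp add: field_simps)
  have kL: "k \<le> L" unfolding L_def by simp
  have Npos: "2 \<le> N" unfolding N_def by simp
  have Tpos: "1 \<le> length ps"
  proof -
    have "real N * (1 - eps/8) \<le> N * mA" using mA_ge Npos by (intro mult_left_mono) (auto simp: mA_def)
    moreover have "8 * real d \<le> N"
    proof -
      have "eps * N \<le> N" using eps by (simp add: mult_left_le_one_le)
      then show ?thesis using N_ge2 by linarith
    qed
    moreover have "real N * (1 - eps/8) \<ge> N * (7/8)" using eps by (intro mult_left_mono) auto
    ultimately have "real (length ps) \<ge> N * (3/4)" using T_ge by linarith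
    then have "real (length ps) > 0" using Npos by linarith
    then have "0 < length ps" by simp
    then show ?thesis by (simp add: Suc_le_eq)
  qed
  show ?thesis
  proof (intro exI conjI allI impI)
    have "L \<le> L * length ps" using Tpos by simp
    then show "k \<le> length W" using lenW kL by linarith
    fix B :: "'a list" assume B: "B \<noteq> [] \<and> length B \<le> k"
    have BL: "length B \<le> L" using B kL by linarith
    define S where "S = (\<Sum>w\<in>D. m w * occl B w)"
    have S_up: "S \<le> real (L + 1 - length B) * measure M (cylinder B)"
      using sum_estimate(1)[OF SI finD lenD _ BL] B by (simp add: S_def m_def)
    have S_lo: "real (L + 1 - length B) * (measure M (cylinder B) - (1 - mA)) \<le> S"
      using sum_estimate(2)[OF SI finD lenD _ BL] B by (simp add: S_def m_def mA_def)
    have rL: "real (L + 1 - length B) = real L + 1 - real (length B)" using BL by simp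
    define Q where "Q = real (\<Sum>w\<in>D. c w * occl B w)"
    have Q_up: "Q \<le> N * S"
    proof -
      have "Q = (\<Sum>w\<in>D. real (c w) * occl B w)" by (simp add: Q_def)
      also have "\<dots> \<le> (\<Sum>w\<in>D. (N * m w) * occl B w)"
        by (intro sum_mono mult_right_mono c_le) auto
      finally show ?thesis by (simp add: S_def sum_distrib_left algebra_simps)
    qed
    have Q_lo: "N * S - d * L \<le> Q"
    proof -
      have "(\<Sum>w\<in>D. (N * m w) * occl B w - L) \<le> (\<Sum>w\<in>D. real (c w) * occl B w)"
      proof (intro sum_mono)
        fix w assume "w \<in> D"
        have oc: "occl B w \<le> L" using occl_le[of B w] B lenD \<open>w \<in> D\<close> by auto
        have "(N * m w - 1) * occl B w \<le> real (c w) * occl B w"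
          by (intro mult_right_mono c_ge) auto
        moreover have "(N * m w - 1) * occl B w = (N * m w) * occl B w - occl B w" by (simp add: algebra_simps)
        ultimately show "(N * m w) * occl B w - L \<le> real (c w) * occl B w" using oc by linarith
      qed
      then show ?thesis by (simp add: Q_def S_def d_def sum_subtractf sum_distrib_left algebra_simps)
    qed
    have occ_lo: "Q \<le> real (occl B W)"
    proof -
      have "(\<Sum>w\<in>D. c w * occl B w) \<le> occl B W" using occl_concat(1)[of B ps] B Q_eq[of B] by (simp add: W_def)
      then show ?thesis unfolding Q_def by (simp only: of_nat_le_iff)
    qed
    have occ_up: "real (occl B W) \<le> Q + length B * real (length ps)"
    proof -
      have "occl B W \<le> sum_list (map (occl B) ps) + length B * length ps"
        using occl_concat(2)[of B ps] B by (simp add: W_def)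
      then have "real (occl B W) \<le> real (sum_list (map (occl B) ps) + length B * length ps)"
        by (simp only: of_nat_le_iff)
      then show ?thesis using Q_eq[of B] unfolding Q_def by simp
    qed
    have mu0: "0 \<le> measure M (cylinder B)" by simp
    have mu1: "measure M (cylinder B) \<le> 1" by simp
    have b1: "1 \<le> real (length B)" using B by (simp add: Suc_le_eq)
    have bk: "real (length B) \<le> real k" using B by simp
    have mAge: "1 - eps/8 \<le> mA" using mA_ge by (simp add: mA_def)
    have S_up': "S \<le> (real L + 1 - real (length B)) * measure M (cylinder B)" using S_up rL by (simp add: add.commute)
    have S_lo': "(real L + 1 - real (length B)) * (measure M (cylinder B) - (1 - mA)) \<le> S" using S_lo rL by (simp add: add.commute)
    have ou: "real (occl B W) \<le> real N * S + real (length B) * real (length ps)" using occ_up Q_up by linarith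
    have ol: "real N * S - real d * real L \<le> real (occl B W)" using occ_lo Q_lo by simp
    have L_ge3: "6 * real k \<le> eps * real L" using L_ge2 by simp
    have N_ge3: "8 * real d \<le> eps * real N" using N_ge2 by simp
    have BL': "real (length B) \<le> real L" using BL by simp
    have "real (occl B W) - measure M (cylinder B) * (real L * real (length ps)) \<le> eps * (real L * real (length ps))"
      by (rule upper_arith[OF eps mu0 mu1 b1 bk L_ge3 of_nat_0_le_iff N_ge3 of_nat_0_le_iff mAge mA_le T_le T_ge ou S_up' of_nat_0_le_iff])
    moreover have "measure M (cylinder B) * (real L * real (length ps)) - real (occl B W) \<le> eps * (real L * real (length ps))"
      by (rule lower_arith[OF eps mu0 mu1 b1 bk L_ge3 of_nat_0_le_iff N_ge3 of_nat_0_le_iff mAge mA_le T_le T_ge ol S_lo' of_nat_0_le_iff BL'])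
    ultimately show "\<bar>real (occl B W) - measure M (cylinder B) * length W\<bar> \<le> eps * length W"
      by (simp add: lenW abs_le_iff)
  qed
qed

end

definition cnt :: "(nat \<Rightarrow> bool) \<Rightarrow> nat \<Rightarrow> nat" where
  "cnt P n = card {i. i < n \<and> P i}"

lemma cnt_split:
  assumes "n \<le> m"
  shows "cnt P m = cnt P n + card {i. n \<le> i \<and> i < m \<and> P i}"
proof -
  have "{i. i < m \<and> P i} = {i. i < n \<and> P i} \<union> {i. n \<le> i \<and> i < m \<and> P i}"
    using assms by auto
  moreover have "{i. i < n \<and> P i} \<inter> {i. n \<le> i \<and> i < m \<and> P i} = {}" by auto
  moreover have "finite {i. i < n \<and> P i}" "finite {i. n \<le> i \<and> i < m \<and> P i}" by auto
  ultimately show ?thesis unfolding cnt_def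
    by (metis (no_types, lifting) card_Un_disjoint)
qed

lemma card_interval_le: "card {i. n \<le> i \<and> i < m \<and> P i} \<le> m - n"
proof -
  have "{i. n \<le> i \<and> i < m \<and> P i} \<subseteq> {n..<m}" by auto
  from card_mono[OF _ this] show ?thesis by simp
qed

lemma block_freq_cnt: "block_freq B x n = real (cnt (occurs_at B x) n) / real n"
  by (simp add: block_freq_def cnt_def)

lemma kappa_props:
  fixes len :: "nat \<Rightarrow> nat"
  assumes len1: "\<forall>k. 1 \<le> len k"
  defines "kap \<equiv> (\<lambda>j. Max {k. k \<le> j \<and> k * len k \<le> j})"
  shows "kap j * len (kap j) \<le> j" and "K * len K \<le> j \<Longrightarrow> K \<le> kap j"
proof -
  have fin: "finite {k. k \<le> j \<and> k * len k \<le> j}" by (rule finite_subset[of _ "{..j}"]) auto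
  have ne: "0 \<in> {k. k \<le> j \<and> k * len k \<le> j}" by simp
  have "kap j \<in> {k. k \<le> j \<and> k * len k \<le> j}" unfolding kap_def using fin ne by (intro Max_in) auto
  then show "kap j * len (kap j) \<le> j" by simp
  assume a: "K * len K \<le> j"
  have "K * 1 \<le> K * len K" using len1 by (intro mult_le_mono2) auto
  then have "K \<le> j" using a by linarith
  then have "K \<in> {k. k \<le> j \<and> k * len k \<le> j}" using a by simp
  then show "K \<le> kap j" unfolding kap_def using fin by (intro Max_ge)
qed

locale blocks =
  fixes blk :: "nat \<Rightarrow> 'a list"
  assumes len1: "\<And>j. 1 \<le> length (blk j)"
begin

definition t :: "nat \<Rightarrow> nat" where "t j = (\<Sum>i<j. length (blk i))"
definition pos :: "nat \<Rightarrow> nat" where "pos p = (LEAST j. p < t (Suc j))"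
definition xs :: "nat \<Rightarrow> 'a" where "xs p = blk (pos p) ! (p - t (pos p))"

lemma t_Suc: "t (Suc j) = t j + length (blk j)" by (simp add: t_def)

lemma t_ge: "j \<le> t j"
proof (induction j)
  case (Suc j) then show ?case using len1[of j] by (simp add: t_Suc)
qed (simp add: t_def)

lemma t_mono: "j \<le> j' \<Longrightarrow> t j \<le> t j'"
  unfolding t_def by (rule sum_mono2) auto

lemma t_strict: "j < j' \<Longrightarrow> t j < t j'"
proof -
  assume "j < j'"
  then have "t (Suc j) \<le> t j'" by (intro t_mono) simp
  moreover have "t j < t (Suc j)" using len1[of j] by (simp add: t_Suc Suc_le_eq)
  ultimately show ?thesis by simp
qed

lemma pos_ex: "\<exists>j. p < t (Suc j)"
  using t_ge[of "Suc p"] by (intro exI[of _ p]) simp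

lemma pos_bounds: "t (pos p) \<le> p" "p < t (Suc (pos p))"
proof -
  show "p < t (Suc (pos p))" unfolding pos_def by (rule LeastI_ex[OF pos_ex])
  show "t (pos p) \<le> p"
  proof (cases "pos p")
    case 0 then show ?thesis by (simp add: t_def)
  next
    case (Suc j)
    then have "j < pos p" by simp
    then have "\<not> p < t (Suc j)" unfolding pos_def by (rule not_less_Least)
    then show ?thesis using Suc by simp
  qed
qed

lemma pos_eq: "t j \<le> p \<Longrightarrow> p < t (Suc j) \<Longrightarrow> pos p = j"
proof -
  assume a: "t j \<le> p" "p < t (Suc j)"
  show "pos p = j" unfolding pos_def
  proof (rule Least_equality)
    show "p < t (Suc j)" by fact
    fix y assume "p < t (Suc y)"
    show "j \<le> y"
    proof (rule ccontr)
      assume "\<not> j \<le> y"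
      then have "Suc y \<le> j" by simp
      then have "t (Suc y) \<le> t j" by (rule t_mono)
      then show False using a \<open>p < t (Suc y)\<close> by simp
    qed
  qed
qed

lemma xs_block: "q < length (blk j) \<Longrightarrow> xs (t j + q) = blk j ! q"
proof -
  assume "q < length (blk j)"
  then have "pos (t j + q) = j" by (intro pos_eq) (auto simp: t_Suc)
  then show ?thesis by (simp add: xs_def)
qed

lemma block_count:
  assumes "B \<noteq> []"
  shows "occl B (blk j) \<le> card {i. t j \<le> i \<and> i < t (Suc j) \<and> occurs_at B xs i}"
    and "card {i. t j \<le> i \<and> i < t (Suc j) \<and> occurs_at B xs i} \<le> occl B (blk j) + length B"
proof -
  define Q where "Q = {q. q + length B \<le> length (blk j) \<and> (\<forall>jj<length B. blk j ! (q + jj) = B ! jj)}"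
  define A where "A = {i. t j \<le> i \<and> i < t (Suc j) \<and> occurs_at B xs i}"
  have oQ: "occl B (blk j) = card Q" by (simp add: occl_def Q_def)
  have finA: "finite A" unfolding A_def by auto
  have finQ: "finite Q" unfolding Q_def by (rule finite_subset[of _ "{..length (blk j)}"]) auto
  have img: "(\<lambda>q. t j + q) ` Q \<subseteq> A"
  proof
    fix i assume "i \<in> (\<lambda>q. t j + q) ` Q"
    then obtain q where q: "q \<in> Q" "i = t j + q" by auto
    have lB: "0 < length B" using assms by simp
    have "occurs_at B xs i" unfolding occurs_at_def
    proof (intro allI impI)
      fix jj assume "jj < length B"
      then have "q + jj < length (blk j)" using q(1) by (auto simp: Q_def)
      then have "xs (t j + (q + jj)) = blk j ! (q + jj)" by (rule xs_block)
      then show "xs (i + jj) = B ! jj" using q \<open>jj < length B\<close> by (auto simp: Q_def add.assoc)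
    qed
    moreover have "i < t (Suc j)"
    proof -
      have "q + length B \<le> length (blk j)" using q(1) by (simp add: Q_def)
      then show ?thesis using q(2) lB unfolding t_Suc by linarith
    qed
    ultimately show "i \<in> A" using q by (auto simp: A_def)
  qed
  have "card ((\<lambda>q. t j + q) ` Q) = card Q" by (rule card_image) (simp add: inj_on_def)
  then show "occl B (blk j) \<le> card {i. t j \<le> i \<and> i < t (Suc j) \<and> occurs_at B xs i}"
    using card_mono[OF finA img] oQ by (simp add: A_def)
  define R where "R = {i. t (Suc j) < i + length B \<and> i < t (Suc j)}"
  have sub: "A \<subseteq> (\<lambda>q. t j + q) ` Q \<union> R"
  proof
    fix i assume iA: "i \<in> A"
    show "i \<in> (\<lambda>q. t j + q) ` Q \<union> R"
    proof (cases "i + length B \<le> t (Suc j)")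
      case False then show ?thesis using iA by (auto simp: R_def A_def)
    next
      case True
      define q where "q = i - t j"
      have i_eq: "i = t j + q" using iA by (auto simp: q_def A_def)
      have "q \<in> Q" unfolding Q_def
      proof (intro CollectI conjI allI impI)
        show "q + length B \<le> length (blk j)" using True i_eq by (simp add: t_Suc)
        fix jj assume jj: "jj < length B"
        have "xs (t j + (q + jj)) = blk j ! (q + jj)"
          using True i_eq jj by (intro xs_block) (simp add: t_Suc)
        moreover have "xs (i + jj) = B ! jj" using iA jj by (auto simp: A_def occurs_at_def)
        ultimately show "blk j ! (q + jj) = B ! jj" using i_eq by (simp add: add.assoc)
      qed
      then show ?thesis using i_eq by auto
    qed
  qed
  have R_sub: "R \<subseteq> {t (Suc j) - length B ..< t (Suc j)}" by (auto simp: R_def)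
  have cR: "card R \<le> length B" using card_mono[OF _ R_sub] by simp
  have finR: "finite R" using R_sub finite_subset by blast
  have "card A \<le> card ((\<lambda>q. t j + q) ` Q \<union> R)"
    by (rule card_mono) (use finQ finR sub in auto)
  also have "\<dots> \<le> card ((\<lambda>q. t j + q) ` Q) + card R" by (rule card_Un_le)
  finally show "card {i. t j \<le> i \<and> i < t (Suc j) \<and> occurs_at B xs i} \<le> occl B (blk j) + length B"
    using cR \<open>card ((\<lambda>q. t j + q) ` Q) = card Q\<close> oQ by (simp add: A_def)
qed

lemma conv:
  fixes mu :: real
  assumes B: "B \<noteq> []" and mu: "0 \<le> mu" "mu \<le> 1"
    and err: "\<And>e::real. e > 0 \<Longrightarrow> \<exists>J0. \<forall>j\<ge>J0. \<bar>real (occl B (blk j)) - mu * length (blk j)\<bar> \<le> e * length (blk j)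
                  \<and> real (length B) \<le> e * length (blk j) \<and> real (length (blk j)) \<le> e * t j"
  shows "(\<lambda>n. block_freq B xs n) \<longlonglongrightarrow> mu"
proof (rule LIMSEQ_I)
  fix r :: real assume r: "0 < r"
  define eps where "eps = r / 2"
  define del where "del = eps / 6"
  have del0: "0 < del" using r by (simp add: del_def eps_def)
  obtain J0 where J0: "\<And>j. j \<ge> J0 \<Longrightarrow> \<bar>real (occl B (blk j)) - mu * length (blk j)\<bar> \<le> del * length (blk j)
                  \<and> real (length B) \<le> del * length (blk j) \<and> real (length (blk j)) \<le> del * t j"
    using err[OF del0] by blast
  define P where "P = occurs_at B xs"
  define D where "D = (\<lambda>n. real (cnt P n) - mu * real n)"
  define cj where "cj = (\<lambda>j. card {i. t j \<le> i \<and> i < t (Suc j) \<and> P i})"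
  have Dstep: "D (t (Suc j)) = D (t j) + (real (cj j) - mu * length (blk j))" for j
  proof -
    have "cnt P (t (Suc j)) = cnt P (t j) + cj j"
      unfolding cj_def by (rule cnt_split) (simp add: t_Suc)
    then show ?thesis by (simp add: D_def t_Suc algebra_simps)
  qed
  have ebound: "\<bar>real (cj j) - mu * length (blk j)\<bar> \<le> 2 * del * length (blk j)" if "j \<ge> J0" for j
  proof -
    have c1: "occl B (blk j) \<le> cj j" and c2: "cj j \<le> occl B (blk j) + length B"
      using block_count[OF B, of j] by (simp_all add: cj_def P_def)
    have "real (occl B (blk j)) \<le> real (cj j)" "real (cj j) \<le> real (occl B (blk j)) + real (length B)"
      using c1 c2 by (simp_all only: of_nat_le_iff of_nat_add[symmetric])
    then show ?thesis using J0[OF that] by (simp add: abs_le_iff)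
  qed
  have induct: "\<bar>D (t J)\<bar> \<le> \<bar>D (t J0)\<bar> + 2 * del * (real (t J) - real (t J0))" if "J0 \<le> J" for J
    using that
  proof (induction J rule: dec_induct)
    case base then show ?case by simp
  next
    case (step J)
    have "\<bar>D (t (Suc J))\<bar> \<le> \<bar>D (t J)\<bar> + 2 * del * length (blk J)"
      using Dstep[of J] ebound[OF step(1)] by linarith
    then show ?case using step(3) by (simp add: t_Suc algebra_simps)
  qed
  define N0 where "N0 = max (t J0) (nat \<lceil>2 * \<bar>D (t J0)\<bar> / eps\<rceil> + 1)"
  show "\<exists>no. \<forall>n\<ge>no. norm (block_freq B xs n - mu) < r"
  proof (intro exI allI impI)
    fix n assume n: "N0 \<le> n"
    define J where "J = pos n"
    have tJ: "t J \<le> n" "n < t (Suc J)" using pos_bounds[of n] by (simp_all add: J_def)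
    have JJ0: "J0 \<le> J"
    proof (rule ccontr)
      assume "\<not> J0 \<le> J"
      then have "t (Suc J) \<le> t J0" by (intro t_mono) simp
      then show False using tJ n by (simp add: N0_def)
    qed
    have n_pos: "0 < n"
    proof -
      have "1 \<le> N0" by (simp add: N0_def)
      then show ?thesis using n by simp
    qed
    have within: "\<bar>D n - D (t J)\<bar> \<le> real n - real (t J)"
    proof -
      have "cnt P n = cnt P (t J) + card {i. t J \<le> i \<and> i < n \<and> P i}" by (rule cnt_split[OF tJ(1)])
      moreover have "card {i. t J \<le> i \<and> i < n \<and> P i} \<le> n - t J" by (rule card_interval_le)
      ultimately have a: "real (cnt P (t J)) \<le> real (cnt P n)" "real (cnt P n) \<le> real (cnt P (t J)) + (real n - real (t J))"
        using tJ(1) by (simp_all add: of_nat_diff)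
      have b: "0 \<le> mu * (real n - real (t J))" "mu * (real n - real (t J)) \<le> real n - real (t J)"
        using mu tJ(1) by (simp_all add: mult_left_le_one_le)
      show ?thesis using a b by (simp add: D_def abs_le_iff algebra_simps)
    qed
    have "real n - real (t J) \<le> length (blk J)" using tJ by (simp add: t_Suc)
    also have "\<dots> \<le> del * t J" using J0[OF JJ0] by simp
    also have "\<dots> \<le> del * n" using del0 tJ by (intro mult_left_mono) auto
    finally have w2: "real n - real (t J) \<le> del * n" .
    have i2: "\<bar>D (t J)\<bar> \<le> \<bar>D (t J0)\<bar> + 2 * del * n"
    proof -
      have "2 * del * (real (t J) - real (t J0)) \<le> 2 * del * n"
        using del0 tJ by (intro mult_left_mono) auto
      then show ?thesis using induct[OF JJ0] by linarith
    qed
    have DJ0: "\<bar>D (t J0)\<bar> \<le> eps * n / 2"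
    proof -
      have "2 * \<bar>D (t J0)\<bar> / eps \<le> n" using n unfolding N0_def by linarith
      then show ?thesis using r by (simp add: eps_def field_simps)
    qed
    have "\<bar>D n\<bar> \<le> eps * n / 2 + 3 * del * n" using within w2 i2 DJ0 by linarith
    also have "\<dots> = eps * n" by (simp add: del_def)
    finally have Dn: "\<bar>D n\<bar> \<le> eps * n" .
    have "block_freq B xs n - mu = D n / n"
      using n_pos by (simp add: block_freq_cnt D_def P_def field_simps)
    then have "\<bar>block_freq B xs n - mu\<bar> = \<bar>D n\<bar> / real n"
      by (simp add: abs_divide)
    also have "\<dots> \<le> eps" using Dn n_pos by (simp add: pos_divide_le_eq)
    finally have "\<bar>block_freq B xs n - mu\<bar> \<le> eps" .
    then show "norm (block_freq B xs n - mu) < r" using r by (simp add: eps_def)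
  qed
qed

end

lemma bf_Nil: "n > 0 \<Longrightarrow> block_freq [] x n = 1"
  by (simp add: block_freq_def occurs_at_def)

lemma bf_Nil_lim: "(\<lambda>n. block_freq [] x n) \<longlonglongrightarrow> 1"
proof (rule LIMSEQ_I)
  fix r :: real assume "0 < r"
  then show "\<exists>no. \<forall>n\<ge>no. norm (block_freq [] x n - 1) < r"
    by (intro exI[of _ 1]) (auto simp: bf_Nil)
qed

lemma exists_normal:
  fixes M :: "(nat \<Rightarrow> 'a::countable) measure"
  assumes SI: "shift_invariant_prob M"
  shows "\<exists>x. mu_normal M x"
proof -
  interpret prob_space M by (rule PS[OF SI])
  have "\<forall>k. \<exists>W. Suc k \<le> length W \<and> (\<forall>B. B \<noteq> [] \<and> length B \<le> Suc k \<longrightarrow>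
           \<bar>real (occl B W) - measure M (cylinder B) * length W\<bar> \<le> (1 / Suc k) * length W)"
  proof
    fix k
    show "\<exists>W. Suc k \<le> length W \<and> (\<forall>B. B \<noteq> [] \<and> length B \<le> Suc k \<longrightarrow>
           \<bar>real (occl B W) - measure M (cylinder B) * length W\<bar> \<le> (1 / Suc k) * length W)"
      by (rule good_word[OF SI]) auto
  qed
  then obtain Wk where Wk: "\<And>k. Suc k \<le> length (Wk k)"
    "\<And>k B. B \<noteq> [] \<Longrightarrow> length B \<le> Suc k \<Longrightarrow>
           \<bar>real (occl B (Wk k)) - measure M (cylinder B) * length (Wk k)\<bar> \<le> (1 / Suc k) * length (Wk k)"
    by metis
  define kap where "kap = (\<lambda>j. Max {k. k \<le> j \<and> k * length (Wk k) \<le> j})"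
  have len1: "\<forall>k. 1 \<le> length (Wk k)"
  proof
    fix k show "1 \<le> length (Wk k)" using Wk(1)[of k] by linarith
  qed
  have kap1: "kap j * length (Wk (kap j)) \<le> j" for j
    using kappa_props(1)[OF len1] by (simp add: kap_def)
  have kap2: "K * length (Wk K) \<le> j \<Longrightarrow> K \<le> kap j" for K j
    using kappa_props(2)[OF len1] by (simp add: kap_def)
  define blk where "blk = (\<lambda>j. Wk (kap j))"
  interpret blocks blk using len1 by unfold_locales (simp add: blk_def)
  have "mu_normal M xs"
    unfolding mu_normal_def
  proof
    fix B :: "'a list"
    show "(\<lambda>n. block_freq B xs n) \<longlonglongrightarrow> measure M (cylinder B)"
    proof (cases "B = []")
      case True
      have "measure M (cylinder B) = 1"
        using True spaceM[OF SI] prob_space by (simp add: cylinder_def)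
      then show ?thesis using True bf_Nil_lim by simp
    next
      case False
      show ?thesis
      proof (rule conv[OF False])
        show "0 \<le> measure M (cylinder B)" "measure M (cylinder B) \<le> 1" by simp_all
        fix e :: real assume e: "0 < e"
        define K :: nat where "K = nat \<lceil>(length B + 1) / e\<rceil> + length B + 1"
        have K1: "(length B + 1) / e \<le> K" unfolding K_def by linarith
        have K2: "length B \<le> K" unfolding K_def by simp
        show "\<exists>J0. \<forall>j\<ge>J0. \<bar>real (occl B (blk j)) - measure M (cylinder B) * length (blk j)\<bar> \<le> e * length (blk j)
                  \<and> real (length B) \<le> e * length (blk j) \<and> real (length (blk j)) \<le> e * t j"
        proof (intro exI allI impI conjI)
          fix j assume j: "K * length (Wk K) \<le> j"
          have kj: "K \<le> kap j" by (rule kap2[OF j])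
          have ek: "real (length B) + 1 \<le> e * kap j"
          proof -
            have "(length B + 1) / e \<le> kap j" using K1 kj by linarith
            then show ?thesis using e by (simp add: field_simps)
          qed
          have kpos: "1 \<le> kap j" using kj K_def by linarith
          have lb: "Suc (kap j) \<le> length (blk j)" using Wk(1) by (simp add: blk_def)
          have "\<bar>real (occl B (blk j)) - measure M (cylinder B) * length (blk j)\<bar> \<le> (1 / Suc (kap j)) * length (blk j)"
            unfolding blk_def using False K2 kj by (intro Wk(2)) auto
          also have "(1 / Suc (kap j)) \<le> e"
          proof -
            have "1 \<le> e * kap j" using ek by simp
            also have "\<dots> \<le> e * Suc (kap j)" using e by (intro mult_left_mono) auto
            finally show ?thesis by (simp add: field_simps)
          qed
          then have "(1 / Suc (kap j)) * length (blk j) \<le> e * length (blk j)" by (intro mult_right_mono) auto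
          finally show "\<bar>real (occl B (blk j)) - measure M (cylinder B) * length (blk j)\<bar> \<le> e * length (blk j)" .
          have "e * kap j \<le> e * length (blk j)" using e lb by (intro mult_left_mono) auto
          then show "real (length B) \<le> e * length (blk j)" using ek by linarith
          have "kap j * length (blk j) \<le> t j" using kap1[of j] t_ge[of j] unfolding blk_def by linarith
          then have "real (kap j) * length (blk j) \<le> t j"
            by (simp only: of_nat_le_iff of_nat_mult[symmetric])
          then have b: "e * (real (kap j) * length (blk j)) \<le> e * t j" using e by (intro mult_left_mono) auto
          have a: "1 * real (length (blk j)) \<le> (e * kap j) * length (blk j)"
            using ek by (intro mult_right_mono) auto
          from a b show "real (length (blk j)) \<le> e * t j" by (simp add: mult.assoc)
        qed
      qed
    qed
  qed
  then show ?thesis by blast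
qed

lemma ld_small:
  assumes "lower_density S = 0" "0 < (d::real)"
  shows "\<exists>b\<ge>N. real (card (S \<inter> {..<b})) < d * b"
proof (rule ccontr)
  assume "\<not> ?thesis"
  then have h: "\<forall>b\<ge>N. d * b \<le> real (card (S \<inter> {..<b}))" by (simp add: not_less)
  have "eventually (\<lambda>n. ereal d \<le> ereal (real (card (S \<inter> {..<n})) / real n)) sequentially"
    unfolding eventually_sequentially
  proof (intro exI[of _ "Suc N"] allI impI)
    fix n assume n: "Suc N \<le> n"
    then have "d * n \<le> real (card (S \<inter> {..<n}))" using h by simp
    then show "ereal d \<le> ereal (real (card (S \<inter> {..<n})) / real n)" using n by (simp add: field_simps)
  qed
  then have "ereal d \<le> lower_density S" unfolding lower_density_def by (rule Liminf_bounded)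
  then show False using assms by simp
qed

lemma card_enum:
  fixes S :: "nat set"
  assumes "infinite S"
  shows "card (S \<inter> {..<enumerate S k}) = k"
proof -
  have "S \<inter> {..<enumerate S k} = enumerate S ` {..<k}"
  proof
    show "enumerate S ` {..<k} \<subseteq> S \<inter> {..<enumerate S k}"
      using assms by (auto intro: enumerate_in_set)
    show "S \<inter> {..<enumerate S k} \<subseteq> enumerate S ` {..<k}"
    proof
      fix s assume s: "s \<in> S \<inter> {..<enumerate S k}"
      then obtain m where m: "enumerate S m = s" using enumerate_Ex[OF assms] by blast
      then have "m < k" using s assms by auto
      then show "s \<in> enumerate S ` {..<k}" using m by auto
    qed
  qed
  then show ?thesis using inj_enumerate[OF assms] by (simp add: card_image inj_on_subset)
qed

lemma enum_less_iff:
  fixes S :: "nat set"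
  assumes "infinite S"
  shows "k < card (S \<inter> {..<n}) \<longleftrightarrow> enumerate S k < n"
proof
  assume "enumerate S k < n"
  then have "S \<inter> {..<Suc (enumerate S k)} \<subseteq> S \<inter> {..<n}" by auto
  then have "card (S \<inter> {..<Suc (enumerate S k)}) \<le> card (S \<inter> {..<n})" by (intro card_mono) auto
  moreover have "S \<inter> {..<Suc (enumerate S k)} = insert (enumerate S k) (S \<inter> {..<enumerate S k})"
    using enumerate_in_set[OF assms] by auto
  ultimately show "k < card (S \<inter> {..<n})" using card_enum[OF assms, of k] by simp
next
  assume a: "k < card (S \<inter> {..<n})"
  show "enumerate S k < n"
  proof (rule ccontr)
    assume "\<not> enumerate S k < n"
    then have "S \<inter> {..<n} \<subseteq> S \<inter> {..<enumerate S k}" by auto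
    then have "card (S \<inter> {..<n}) \<le> k" using card_enum[OF assms, of k] by (metis card_mono finite_Int finite_lessThan)
    then show False using a by simp
  qed
qed

lemma f_unbounded:
  fixes S :: "nat set"
  assumes "infinite S"
  shows "\<exists>n. m \<le> card (S \<inter> {..<n})"
  using enum_less_iff[OF assms, of m "Suc (enumerate S m)"] by (intro exI[of _ "Suc (enumerate S m)"]) simp

lemma f_Suc: fixes S :: "nat set" shows "card (S \<inter> {..<Suc m}) \<le> card (S \<inter> {..<m}) + 1"
proof -
  have "S \<inter> {..<Suc m} \<subseteq> insert m (S \<inter> {..<m})" by auto
  then have "card (S \<inter> {..<Suc m}) \<le> card (insert m (S \<inter> {..<m}))" by (intro card_mono) auto
  also have "\<dots> \<le> card (S \<inter> {..<m}) + 1" by (simp add: card_insert_if)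
  finally show ?thesis .
qed

lemma f_mono: fixes S :: "nat set" shows "m \<le> n \<Longrightarrow> card (S \<inter> {..<m}) \<le> card (S \<inter> {..<n})"
  by (intro card_mono) auto

lemma good_pair:
  fixes S :: "nat set" and eps :: real
  assumes inf: "infinite S" and ld: "lower_density S = 0" and eps: "0 < eps" "eps < 1"
  shows "\<exists>b n. N \<le> b \<and> b \<le> n \<and> real (card (S \<inter> {..<n})) \<le> eps * b
     \<and> real (card (S \<inter> {..<b})) \<le> eps * card (S \<inter> {..<n}) \<and> 0 < card (S \<inter> {..<b})"
proof -
  define f where "f = (\<lambda>n. card (S \<inter> {..<n}))"
  define s0 where "s0 = enumerate S 0"
  have s0S: "s0 \<in> S" using enumerate_in_set[OF inf] by (simp add: s0_def)
  define N' where "N' = max N (max (Suc s0) (nat \<lceil>2 / eps\<rceil>))"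
  obtain b where b: "N' \<le> b" "real (f b) < (eps * eps / 2) * b"
    using ld_small[OF ld, of "eps * eps / 2" N'] eps by (auto simp: f_def)
  have fb_pos: "0 < f b"
  proof -
    have "s0 \<in> S \<inter> {..<b}" using s0S b(1) by (auto simp: N'_def)
    then show ?thesis unfolding f_def by (metis card_gt_0_iff emptyE finite_Int finite_lessThan)
  qed
  have b2: "2 / eps \<le> b" using b(1) unfolding N'_def by linarith
  define th :: nat where "th = nat \<lceil>f b / eps\<rceil>"
  have th1: "f b / eps \<le> th" unfolding th_def by linarith
  have th2: "th < f b / eps + 1"
  proof -
    have x0: "0 \<le> real (f b) / eps" using eps by simp
    then have "real th = of_int \<lceil>f b / eps\<rceil>" unfolding th_def by simp
    then show ?thesis using ceiling_correct[of "real (f b) / eps"] by linarith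
  qed
  have fb_th: "f b < th"
  proof -
    have "real (f b) < f b / eps" using fb_pos eps by (simp add: field_simps)
    then show ?thesis using th1 by linarith
  qed
  obtain n0 where "th \<le> f n0" using f_unbounded[OF inf] unfolding f_def by blast
  define n where "n = (LEAST n. th \<le> f n)"
  have n1: "th \<le> f n" unfolding n_def by (rule LeastI) fact
  have n_ne0: "n \<noteq> 0"
  proof
    assume "n = 0"
    then have "f n = 0" by (simp add: f_def)
    then show False using n1 fb_th by linarith
  qed
  then obtain m where m: "n = Suc m" by (cases n) auto
  have mn: "m < (LEAST n. th \<le> f n)" using m n_def by simp
  have "\<not> th \<le> f m" using not_less_Least[OF mn] .
  moreover have "f n \<le> f m + 1" using f_Suc[of S m] by (simp add: f_def m)
  ultimately have fn_le: "f n \<le> th" by linarith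
  have bn: "b \<le> n"
  proof (rule ccontr)
    assume "\<not> b \<le> n"
    then have "f n \<le> f b" unfolding f_def by (intro f_mono) simp
    then show False using n1 fb_th by linarith
  qed
  have "real (f n) \<le> eps * b"
  proof -
    have "real (f n) < f b / eps + 1" using fn_le th2 by linarith
    moreover have "f b / eps < eps * b / 2" using b(2) eps by (simp add: field_simps)
    moreover have "1 \<le> eps * b / 2" using b2 eps by (simp add: field_simps)
    ultimately show ?thesis by linarith
  qed
  moreover have "real (f b) \<le> eps * f n"
  proof -
    have "f b / eps \<le> f n" using th1 n1 by linarith
    then show ?thesis using eps by (simp add: field_simps)
  qed
  moreover have "N \<le> b" using b(1) by (simp add: N'_def)
  ultimately show ?thesis using bn fb_pos unfolding f_def by blast
qed

lemma sparse_T: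
  fixes S :: "nat set"
  assumes inf: "infinite S" and ld: "lower_density S = 0"
  shows "\<exists>T\<subseteq>S. (\<lambda>m. real (card (T \<inter> {..<m})) / real m) \<longlonglongrightarrow> 0 \<and>
           (\<forall>j. \<exists>n. j + 2 \<le> card (S \<inter> {..<n}) \<and>
                 (1 - 1 / (real j + 2)) * card (S \<inter> {..<n}) \<le> card (T \<inter> {..<n}))"
proof -
  define f where "f = (\<lambda>n. card (S \<inter> {..<n}))"
  define GP where "GP = (\<lambda>(eps::real) N (p::nat\<times>nat). N \<le> fst p \<and> fst p \<le> snd p \<and> real (f (snd p)) \<le> eps * fst p
     \<and> real (f (fst p)) \<le> eps * f (snd p) \<and> 0 < f (fst p))"
  define g where "g = rec_nat (0::nat,0::nat) (\<lambda>j p. SOME q. GP (1 / (real j + 2)) (Suc j * snd p) q)"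
  have g0: "g 0 = (0,0)" by (simp add: g_def)
  have gS: "g (Suc j) = (SOME q. GP (1 / (real j + 2)) (Suc j * snd (g j)) q)" for j by (simp add: g_def)
  have GPj: "GP (1 / (real j + 2)) (Suc j * snd (g j)) (g (Suc j))" for j
  proof -
    have "\<exists>q. GP (1 / (real j + 2)) (Suc j * snd (g j)) q"
      using good_pair[OF inf ld, of "1 / (real j + 2)" "Suc j * snd (g j)"]
      by (auto simp: GP_def f_def)
    then show ?thesis unfolding gS by (rule someI_ex)
  qed
  define bb where "bb = (\<lambda>j. fst (g (Suc j)))"
  define nn where "nn = (\<lambda>j. snd (g (Suc j)))"
  have A1: "Suc j * snd (g j) \<le> bb j" for j using GPj[of j] by (simp add: GP_def bb_def)
  have A2: "bb j \<le> nn j" for j using GPj[of j] by (simp add: GP_def bb_def nn_def)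
  have A3: "real (f (nn j)) \<le> bb j / (real j + 2)" for j using GPj[of j] by (simp add: GP_def bb_def nn_def)
  have A4: "real (f (bb j)) \<le> f (nn j) / (real j + 2)" for j using GPj[of j] by (simp add: GP_def bb_def nn_def)
  have A5: "0 < f (bb j)" for j using GPj[of j] by (simp add: GP_def bb_def nn_def)
  have nb: "nn j \<le> bb (Suc j)" for j
  proof -
    have "Suc (Suc j) * nn j \<le> bb (Suc j)" using A1[of "Suc j"] by (simp add: nn_def)
    moreover have "nn j \<le> Suc (Suc j) * nn j" by simp
    ultimately show ?thesis by linarith
  qed
  have bb_mono: "mono bb" unfolding mono_iff_le_Suc using A2 nb le_trans by blast
  have nn_mono: "mono nn" unfolding mono_iff_le_Suc using A2 nb le_trans by blast
  have bb_pos: "0 < bb j" for j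
  proof (rule ccontr)
    assume "\<not> 0 < bb j"
    then have "f (bb j) = 0" by (simp add: f_def)
    then show False using A5[of j] by simp
  qed
  have bb_ge: "j \<le> bb j" for j
  proof (cases j)
    case 0 then show ?thesis by simp
  next
    case (Suc i)
    have "Suc (Suc i) * 1 \<le> Suc (Suc i) * nn i"
      using bb_pos[of i] A2[of i] by (intro mult_le_mono2) linarith
    then show ?thesis using A1[of "Suc i"] Suc by (simp add: nn_def)
  qed
  define T where "T = {s\<in>S. \<exists>j. bb j \<le> s \<and> s < nn j}"
  have TS: "T \<subseteq> S" by (auto simp: T_def)
  have dens: "real (card (T \<inter> {..<m})) \<le> 2 * m / (real i + 1)" if m: "bb i \<le> m" "m < bb (Suc i)" for m i
  proof -
    have sub: "T \<inter> {..<m} \<subseteq> {..<snd (g i)} \<union> (S \<inter> {..<nn i})"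
    proof
      fix s assume s: "s \<in> T \<inter> {..<m}"
      then obtain k where k: "s \<in> S" "bb k \<le> s" "s < nn k" by (auto simp: T_def)
      show "s \<in> {..<snd (g i)} \<union> (S \<inter> {..<nn i})"
      proof (cases k i rule: linorder_cases)
        case less
        then obtain i' where i': "i = Suc i'" "k \<le> i'" by (cases i) auto
        have "nn k \<le> nn i'" using nn_mono i'(2) by (simp add: mono_def)
        then show ?thesis using k i' by (simp add: nn_def)
      next
        case equal then show ?thesis using k by simp
      next
        case greater
        then have "bb (Suc i) \<le> bb k" using bb_mono by (simp add: mono_def)
        then show ?thesis using k s m by simp
      qed
    qed
    have "card (T \<inter> {..<m}) \<le> card ({..<snd (g i)} \<union> (S \<inter> {..<nn i}))"
      by (rule card_mono[OF _ sub]) auto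
    also have "\<dots> \<le> card {..<snd (g i)} + card (S \<inter> {..<nn i})" by (rule card_Un_le)
    also have "\<dots> = snd (g i) + f (nn i)" by (simp add: f_def)
    finally have c1: "real (card (T \<inter> {..<m})) \<le> real (snd (g i)) + real (f (nn i))"
      by (simp only: of_nat_le_iff of_nat_add[symmetric])
    have "real (Suc i * snd (g i)) \<le> bb i" using A1[of i] by (simp only: of_nat_le_iff)
    then have c2: "real (snd (g i)) \<le> bb i / (real i + 1)" by (simp add: field_simps)
    have c3: "real (f (nn i)) \<le> bb i / (real i + 1)"
    proof -
      have "bb i / (real i + 2) \<le> bb i / (real i + 1)" by (intro divide_left_mono) auto
      then show ?thesis using A3[of i] by linarith
    qed
    have "bb i / (real i + 1) \<le> m / (real i + 1)" using m by (intro divide_right_mono) auto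
    then show ?thesis using c1 c2 c3 by simp
  qed
  have lim: "(\<lambda>m. real (card (T \<inter> {..<m})) / real m) \<longlonglongrightarrow> 0"
  proof (rule LIMSEQ_I)
    fix r :: real assume r: "0 < r"
    obtain J :: nat where J: "2 / r < J" using reals_Archimedean2 by blast
    show "\<exists>no. \<forall>m\<ge>no. norm (real (card (T \<inter> {..<m})) / real m - 0) < r"
    proof (intro exI allI impI)
      fix m assume m: "Suc (bb J) \<le> m"
      have ex: "\<exists>i. m < bb (Suc i)" using bb_ge[of "Suc m"] by (intro exI[of _ m]) simp
      define i where "i = (LEAST i. m < bb (Suc i))"
      have i1: "m < bb (Suc i)" unfolding i_def by (rule LeastI_ex[OF ex])
      have i2: "bb i \<le> m"
      proof (cases i)
        case 0
        have "bb 0 \<le> bb J" using bb_mono by (simp add: mono_def)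
        then show ?thesis using m 0 by simp
      next
        case (Suc i')
        then have "i' < (LEAST i. m < bb (Suc i))" by (simp add: i_def)
        then have "\<not> m < bb (Suc i')" by (rule not_less_Least)
        then show ?thesis using Suc by simp
      qed
      have Ji: "J \<le> i"
      proof (rule ccontr)
        assume "\<not> J \<le> i"
        then have "bb (Suc i) \<le> bb J" using bb_mono by (simp add: mono_def)
        then show False using i1 m by simp
      qed
      have mpos: "0 < real m" using m by simp
      have Jpos: "0 < real J" using J r by (smt (verit) divide_pos_pos)
      have "real (card (T \<inter> {..<m})) / real m \<le> 2 / (real i + 1)"
        using dens[OF i2 i1] mpos by (simp add: field_simps)
      also have "2 / (real i + 1) \<le> 2 / real J" using Ji Jpos
        by (intro divide_left_mono) auto
      also have "2 / real J < r"
      proof -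
        have "2 < r * real J" using J r by (simp add: field_simps)
        then show ?thesis using Jpos by (simp add: field_simps)
      qed
      finally show "norm (real (card (T \<inter> {..<m})) / real m - 0) < r" by simp
    qed
  qed
  have frac: "\<exists>n. j + 2 \<le> card (S \<inter> {..<n}) \<and>
                 (1 - 1 / (real j + 2)) * card (S \<inter> {..<n}) \<le> card (T \<inter> {..<n})" for j
  proof (intro exI conjI)
    have "1 \<le> real (f (bb j))" using A5[of j] by simp
    then have "1 \<le> f (nn j) / (real j + 2)" using A4[of j] by linarith
    then have "real j + 2 \<le> f (nn j)" by (simp add: field_simps)
    then show "j + 2 \<le> card (S \<inter> {..<nn j})" by (simp add: f_def)
    have split: "S \<inter> {..<nn j} = (S \<inter> {..<bb j}) \<union> (S \<inter> {bb j..<nn j})" using A2[of j] by auto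
    have "f (nn j) = f (bb j) + card (S \<inter> {bb j..<nn j})"
      unfolding f_def split by (rule card_Un_disjoint) auto
    moreover have "S \<inter> {bb j..<nn j} \<subseteq> T \<inter> {..<nn j}" by (auto simp: T_def)
    then have "card (S \<inter> {bb j..<nn j}) \<le> card (T \<inter> {..<nn j})" by (intro card_mono) auto
    ultimately have "real (f (nn j)) - real (f (bb j)) \<le> card (T \<inter> {..<nn j})" by simp
    then show "(1 - 1 / (real j + 2)) * card (S \<inter> {..<nn j}) \<le> card (T \<inter> {..<nn j})"
      using A4[of j] by (simp add: f_def algebra_simps)
  qed
  show ?thesis using TS lim frac by blast
qed

lemma modify_normal:
  assumes xn: "mu_normal M x"
    and dens: "(\<lambda>m. real (card (T \<inter> {..<m})) / real m) \<longlonglongrightarrow> 0"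
    and eq: "\<And>p. p \<notin> T \<Longrightarrow> y p = x p"
  shows "mu_normal M y"
  unfolding mu_normal_def
proof
  fix B :: "'a list"
  define L where "L = length B"
  define E where "E = (\<lambda>n. {i. i < n \<and> (\<exists>j<L. i + j \<in> T)})"
  have same: "occurs_at B y i = occurs_at B x i" if "\<not> (\<exists>j<L. i + j \<in> T)" for i
    using that eq by (auto simp: occurs_at_def L_def)
  have s1: "{i. i < n \<and> occurs_at B y i} \<subseteq> {i. i < n \<and> occurs_at B x i} \<union> E n" for n
    using same by (auto simp: E_def)
  have s2: "{i. i < n \<and> occurs_at B x i} \<subseteq> {i. i < n \<and> occurs_at B y i} \<union> E n" for n
    using same by (auto simp: E_def)
  have cE: "card (E n) \<le> L * (card (T \<inter> {..<n}) + L)" for n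
  proof -
    have sub: "E n \<subseteq> (\<Union>j\<in>{..<L}. {i. i + j \<in> T \<inter> {..<n+L}})" by (auto simp: E_def)
    have cj: "card {i. i + j \<in> T \<inter> {..<n+L}} \<le> card (T \<inter> {..<n+L})" for j
    proof -
      have "(\<lambda>i. i + j) ` {i. i + j \<in> T \<inter> {..<n+L}} \<subseteq> T \<inter> {..<n+L}" by auto
      moreover have "card ((\<lambda>i. i + j) ` {i. i + j \<in> T \<inter> {..<n+L}}) = card {i. i + j \<in> T \<inter> {..<n+L}}"
        by (rule card_image) (simp add: inj_on_def)
      ultimately show ?thesis by (metis card_mono finite_Int finite_lessThan)
    qed
    have fin: "finite {i. i + j \<in> T \<inter> {..<n+L}}" for j
      by (rule finite_subset[of _ "{..<n+L}"]) auto
    have "card (E n) \<le> card (\<Union>j\<in>{..<L}. {i. i + j \<in> T \<inter> {..<n+L}})"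
      by (rule card_mono[OF _ sub]) (use fin in \<open>simp add: Int_def\<close>)
    also have "\<dots> \<le> (\<Sum>j<L. card {i. i + j \<in> T \<inter> {..<n+L}})" by (rule card_UN_le) simp
    also have "\<dots> \<le> (\<Sum>j<L. card (T \<inter> {..<n+L}))" by (intro sum_mono cj)
    also have "\<dots> = L * card (T \<inter> {..<n+L})" by simp
    also have "card (T \<inter> {..<n+L}) \<le> card (T \<inter> {..<n}) + L"
    proof -
      have "T \<inter> {..<n+L} \<subseteq> (T \<inter> {..<n}) \<union> {n..<n+L}" by auto
      then have "card (T \<inter> {..<n+L}) \<le> card ((T \<inter> {..<n}) \<union> {n..<n+L})" by (intro card_mono) auto
      also have "\<dots> \<le> card (T \<inter> {..<n}) + card {n..<n+L}" by (rule card_Un_le)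
      finally show ?thesis by simp
    qed
    then have "L * card (T \<inter> {..<n+L}) \<le> L * (card (T \<inter> {..<n}) + L)" by (rule mult_le_mono2)
    finally show ?thesis .
  qed
  have diff: "norm (block_freq B y n - block_freq B x n) \<le> real L * (real (card (T \<inter> {..<n})) / real n + real L / real n)" for n
  proof -
    have fx: "finite {i. i < n \<and> occurs_at B x i}" "finite {i. i < n \<and> occurs_at B y i}" by auto
    have finE: "finite (E n)" by (auto simp: E_def)
    have a: "card {i. i < n \<and> occurs_at B y i} \<le> card {i. i < n \<and> occurs_at B x i} + card (E n)"
      by (rule le_trans[OF card_mono[OF _ s1] card_Un_le]) (use fx finE in auto)
    have b: "card {i. i < n \<and> occurs_at B x i} \<le> card {i. i < n \<and> occurs_at B y i} + card (E n)"
      by (rule le_trans[OF card_mono[OF _ s2] card_Un_le]) (use fx finE in auto)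
    have c: "real (card (E n)) \<le> real L * (real (card (T \<inter> {..<n})) + real L)"
      using cE[of n] by (simp only: of_nat_le_iff of_nat_add[symmetric] of_nat_mult[symmetric])
    have "\<bar>real (card {i. i < n \<and> occurs_at B y i}) - real (card {i. i < n \<and> occurs_at B x i})\<bar>
          \<le> real L * (real (card (T \<inter> {..<n})) + real L)"
      using a b c by (simp add: abs_le_iff)
    then have "\<bar>real (card {i. i < n \<and> occurs_at B y i}) - real (card {i. i < n \<and> occurs_at B x i})\<bar> / real n
          \<le> real L * (real (card (T \<inter> {..<n})) + real L) / real n"
      by (intro divide_right_mono) auto
    then show ?thesis by (simp add: block_freq_def diff_divide_distrib[symmetric] abs_divide add_divide_distrib[symmetric])
  qed
  have g0: "(\<lambda>n. real L * (real (card (T \<inter> {..<n})) / real n + real L / real n)) \<longlonglongrightarrow> 0"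
    using tendsto_mult[OF tendsto_const[of "real L"] tendsto_add[OF dens lim_const_over_n[of "real L"]]] by simp
  have "(\<lambda>n. block_freq B y n - block_freq B x n) \<longlonglongrightarrow> 0"
    by (rule Lim_null_comparison[OF _ g0]) (use diff in auto)
  moreover have "(\<lambda>n. block_freq B x n) \<longlonglongrightarrow> measure M (cylinder B)" using xn by (simp add: mu_normal_def)
  ultimately have "(\<lambda>n. block_freq B x n + (block_freq B y n - block_freq B x n)) \<longlonglongrightarrow> measure M (cylinder B) + 0"
    by (intro tendsto_add)
  then show "(\<lambda>n. block_freq B y n) \<longlonglongrightarrow> measure M (cylinder B)" by simp
qed

lemma enum_image:
  fixes S T :: "nat set"
  assumes inf: "infinite S" and TS: "T \<subseteq> S"
  shows "card {k. k < card (S \<inter> {..<n}) \<and> enumerate S k \<in> T} = card (T \<inter> {..<n})"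
proof -
  have "enumerate S ` {k. k < card (S \<inter> {..<n}) \<and> enumerate S k \<in> T} = T \<inter> {..<n}"
  proof
    show "enumerate S ` {k. k < card (S \<inter> {..<n}) \<and> enumerate S k \<in> T} \<subseteq> T \<inter> {..<n}"
      using enum_less_iff[OF inf] by auto
    show "T \<inter> {..<n} \<subseteq> enumerate S ` {k. k < card (S \<inter> {..<n}) \<and> enumerate S k \<in> T}"
    proof
      fix s assume s: "s \<in> T \<inter> {..<n}"
      then obtain k where k: "enumerate S k = s" using enumerate_Ex[OF inf] TS by blast
      then have "k < card (S \<inter> {..<n})" using enum_less_iff[OF inf] s by auto
      then show "s \<in> enumerate S ` {k. k < card (S \<inter> {..<n}) \<and> enumerate S k \<in> T}" using k s by auto
    qed
  qed
  moreover have "inj_on (enumerate S) {k. k < card (S \<inter> {..<n}) \<and> enumerate S k \<in> T}"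
    using inj_enumerate[OF inf] by (rule inj_on_subset) simp
  ultimately show ?thesis by (metis card_image)
qed

theorem mainTheorem3:
  fixes M :: "(nat \<Rightarrow> 'a::countable) measure" and S :: "nat set"
  assumes "\<exists>a b :: 'a. a \<noteq> b"
    and "shift_invariant_prob M"
    and "infinite S"
    and "lower_density S = 0"
  shows "\<exists>x. mu_normal M x \<and> \<not> simply_mu_normal M (restrict_seq x S)"
proof -
  note SI = assms(2) and inf = assms(3)
  interpret prob_space M by (rule PS[OF SI])
  obtain x where xn: "mu_normal M x" using exists_normal[OF SI] by blast
  obtain T where TS: "T \<subseteq> S" and dens: "(\<lambda>m. real (card (T \<inter> {..<m})) / real m) \<longlonglongrightarrow> 0"
    and frac: "\<And>j. \<exists>n. j + 2 \<le> card (S \<inter> {..<n}) \<and>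
                 (1 - 1 / (real j + 2)) * card (S \<inter> {..<n}) \<le> card (T \<inter> {..<n})"
    using sparse_T[OF inf assms(4)] by blast
  obtain a c :: 'a where ac: "a \<noteq> c" using assms(1) by blast
  have "\<exists>b. measure M (cylinder [b]) < 1"
  proof (cases "measure M (cylinder [a]) < 1")
    case True then show ?thesis by blast
  next
    case False
    have disj: "cylinder [a] \<inter> cylinder [c] = {}" using cyl_disj[of "[a]" "[c]"] ac by simp
    have "measure M (cylinder [a] \<union> cylinder [c]) = measure M (cylinder [a]) + measure M (cylinder [c])"
      using disj cyl_sets[OF SI] by (intro finite_measure_Union) auto
    moreover have "measure M (cylinder [a] \<union> cylinder [c]) \<le> 1" by simp
    moreover have "0 \<le> measure M (cylinder [c])" by simp
    ultimately have "measure M (cylinder [c]) < 1" using False by linarith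
    then show ?thesis by blast
  qed
  then obtain b where b: "measure M (cylinder [b]) < 1" by blast
  define y where "y = (\<lambda>p. if p \<in> T then b else x p)"
  have yn: "mu_normal M y" by (rule modify_normal[OF xn dens]) (simp add: y_def)
  have "\<not> simply_mu_normal M (restrict_seq y S)"
  proof
    assume "simply_mu_normal M (restrict_seq y S)"
    then have lim: "(\<lambda>K. block_freq [b] (restrict_seq y S) K) \<longlonglongrightarrow> measure M (cylinder [b])"
      by (simp add: simply_mu_normal_def)
    define mb where "mb = measure M (cylinder [b])"
    define cc where "cc = (1 + mb) / 2"
    have "cc > mb" using b by (simp add: cc_def mb_def)
    then have "eventually (\<lambda>K. block_freq [b] (restrict_seq y S) K < cc) sequentially"
      using lim by (intro order_tendstoD(2)) (auto simp: mb_def)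
    then obtain N0 where N0: "\<And>K. K \<ge> N0 \<Longrightarrow> block_freq [b] (restrict_seq y S) K < cc"
      by (auto simp: eventually_sequentially)
    define j where "j = N0 + nat \<lceil>2 / (1 - mb)\<rceil>"
    have mb1: "0 < 1 - mb" using b by (simp add: mb_def)
    have j1: "2 / (1 - mb) < real j + 2" unfolding j_def by linarith
    have jc: "1 / (real j + 2) < 1 - cc"
    proof -
      have "2 < (real j + 2) * (1 - mb)" using j1 mb1 by (simp add: field_simps)
      then show ?thesis by (simp add: cc_def field_simps)
    qed
    obtain n where n1: "j + 2 \<le> card (S \<inter> {..<n})"
      and n2: "(1 - 1 / (real j + 2)) * card (S \<inter> {..<n}) \<le> card (T \<inter> {..<n})"
      using frac[of j] by blast
    define K where "K = card (S \<inter> {..<n})"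
    have KN0: "N0 \<le> K" using n1 by (simp add: K_def j_def)
    have Kpos: "0 < real K" using n1 by (simp add: K_def)
    have "{k. k < K \<and> enumerate S k \<in> T} \<subseteq> {i. i < K \<and> occurs_at [b] (restrict_seq y S) i}"
      by (auto simp: occurs_at_def restrict_seq_def y_def)
    then have "card {k. k < K \<and> enumerate S k \<in> T} \<le> card {i. i < K \<and> occurs_at [b] (restrict_seq y S) i}"
      by (intro card_mono) auto
    then have "card (T \<inter> {..<n}) \<le> card {i. i < K \<and> occurs_at [b] (restrict_seq y S) i}"
      using enum_image[OF inf TS, of n] by (simp add: K_def)
    then have "(1 - 1 / (real j + 2)) * K \<le> card {i. i < K \<and> occurs_at [b] (restrict_seq y S) i}"
      using n2 by (simp add: K_def)
    then have "1 - 1 / (real j + 2) \<le> block_freq [b] (restrict_seq y S) K"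
      using Kpos by (simp add: block_freq_def field_simps)
    moreover have "block_freq [b] (restrict_seq y S) K < cc" using N0[OF KN0] .
    ultimately show False using jc by linarith
  qed
  then show ?thesis using yn by blast
qed

end
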